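(* Let $1<n\leq m$ and let $v\in Z_{n,m}$ with $h(v)\geq h_{n,m}$ and $\sum_{i\in I_c(v)}v_i=0$. Then $d(v,0)\leq D_{n,m}$.
   Context: Elements of $\mathbb{Z}_n$ are identified with representatives in $\{0,\dots,n-1\}$ (so $v_0,v_{m+1}$ are such integers in sums). $Z_{n,m}$ has vertices $u=(u_0,\dots,u_{m+1})\in\mathbb{Z}_n\times\{-1,0,1\}^m\times\mathbb{Z}_n$ with $\sum u_i\equiv0\pmod n$; $u,v$ adjacent if there is $0\leq i\leq m$ with $u_j=v_j$ for $j\notin\{i,i+1\}$ and either ($u_i=v_i+1$, $u_{i+1}=v_{i+1}-1$) or ($u_i=v_i-1$, $u_{i+1}=v_{i+1}+1$), arithmetic in coordinates $0,m+1$ in $\mathbb{Z}_n$. $d$ is graph distance, $0$ the all-zero vertex. $\operatorname{Piv}(v)$ is the set of $-1\le p\le m+1$ with $n\mid\sum_{i=0}^pv_i$. $p_l(v)=\max\{p\in\operatorname{Piv}(v):p<\frac m2\}$, $p_r(v)=\min\{p\in\operatorname{Piv}(v):p\ge\frac m2\}$, $I_c(v)=\{p_l(v)+1,\dots,p_r(v)\}$, $h(v)=\min\{|p-\frac m2|:p\in\operatorname{Piv}(v)\}$, $h_{n,m}=\frac n2$ if $2\mid(m-n)$ and $\frac{n+1}2$ otherwise. $u^{(0)}$: $u_i=1$ ($1\le i\le m$), $u_0\equiv-\lfloor\frac{m-n}2\rfloor\pmod n$; for $n<m$, $m-n$ odd, $u^{(1)}$: $u_{\lceil(m+1)/2\rceil}=0$,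 other $u_i=1$ ($1\le i\le m$), $u_0\equiv-\lfloor\frac{m-n}2\rfloor\pmod n$. $D_{n,m}=d(u^{(0)},0)$ if $2\mid(m-n)$, else $\max\{d(u^{(0)},0),d(u^{(1)},0)\}$. *)

theory Defs
  imports Complex_Main "HOL-Library.Extended_Nat"
begin

text \<open>Vertices of Z_{n,m} are represented as functions v :: nat => int with
  v 0, v (m+1) in {0..n-1} (representatives of Z_n), v i in {-1,0,1} for 1 <= i <= m,
  v i = 0 for i > m+1 (canonical padding), and n dividing the sum of all entries.\<close>

definition Zvert :: "nat \<Rightarrow> nat \<Rightarrow> (nat \<Rightarrow> int) \<Rightarrow> bool" where
  "Zvert n m v \<longleftrightarrow>
     v 0 \<in> {0..<int n} \<and> v (m+1) \<in> {0..<int n} \<and>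
     (\<forall>i. 1 \<le> i \<and> i \<le> m \<longrightarrow> v i \<in> {-1,0,1}) \<and>
     (\<forall>i>m+1. v i = 0) \<and>
     int n dvd (\<Sum>i\<le>m+1. v i)"

definition cadd :: "nat \<Rightarrow> nat \<Rightarrow> nat \<Rightarrow> int \<Rightarrow> int \<Rightarrow> int" where
  "cadd n m k x y = (if k = 0 \<or> k = m+1 then (x + y) mod int n else x + y)"

definition Zadj :: "nat \<Rightarrow> nat \<Rightarrow> (nat \<Rightarrow> int) \<Rightarrow> (nat \<Rightarrow> int) \<Rightarrow> bool" where
  "Zadj n m u v \<longleftrightarrow> Zvert n m u \<and> Zvert n m v \<and>
     (\<exists>i\<le>m. (\<forall>j. j \<noteq> i \<and> j \<noteq> i+1 \<longrightarrow> u j = v j) \<and>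
        ((u i = cadd n m i (v i) 1 \<and> u (i+1) = cadd n m (i+1) (v (i+1)) (-1)) \<or>
         (u i = cadd n m i (v i) (-1) \<and> u (i+1) = cadd n m (i+1) (v (i+1)) 1)))"

text \<open>Graph distance (infinity if not connected).\<close>
definition Zdist :: "nat \<Rightarrow> nat \<Rightarrow> (nat \<Rightarrow> int) \<Rightarrow> (nat \<Rightarrow> int) \<Rightarrow> enat" where
  "Zdist n m u v = (INF k \<in> {k. (Zadj n m ^^ k) u v}. enat k)"

definition Zzero :: "nat \<Rightarrow> int" where
  "Zzero = (\<lambda>_. 0)"

definition Piv :: "nat \<Rightarrow> nat \<Rightarrow> (nat \<Rightarrow> int) \<Rightarrow> int set" where
  "Piv n m v = {p. -1 \<le> p \<and> p \<le> int m + 1 \<and> int n dvd (\<Sum>i\<in>{0..p}. v (nat i))}"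

definition p_l :: "nat \<Rightarrow> nat \<Rightarrow> (nat \<Rightarrow> int) \<Rightarrow> int" where
  "p_l n m v = Max {p \<in> Piv n m v. real_of_int p < real m / 2}"

definition p_r :: "nat \<Rightarrow> nat \<Rightarrow> (nat \<Rightarrow> int) \<Rightarrow> int" where
  "p_r n m v = Min {p \<in> Piv n m v. real_of_int p \<ge> real m / 2}"

definition I_c :: "nat \<Rightarrow> nat \<Rightarrow> (nat \<Rightarrow> int) \<Rightarrow> int set" where
  "I_c n m v = {p_l n m v + 1 .. p_r n m v}"

definition hpiv :: "nat \<Rightarrow> nat \<Rightarrow> (nat \<Rightarrow> int) \<Rightarrow> real" where
  "hpiv n m v = Min ((\<lambda>p. \<bar>real_of_int p - real m / 2\<bar>) ` Piv n m v)"

definition h_nm :: "nat \<Rightarrow> nat \<Rightarrow> real" where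
  "h_nm n m = (if even (int m - int n) then real n / 2 else (real n + 1) / 2)"

text \<open>u^(0); the last coordinate is the unique one making it a vertex.\<close>
definition u0 :: "nat \<Rightarrow> nat \<Rightarrow> nat \<Rightarrow> int" where
  "u0 n m = (let a = (- \<lfloor>(real m - real n) / 2\<rfloor>) mod int n in
     (\<lambda>i. if i = 0 then a else if i \<le> m then 1
          else if i = m+1 then (- (a + int m)) mod int n else 0))"

definition u1 :: "nat \<Rightarrow> nat \<Rightarrow> nat \<Rightarrow> int" where
  "u1 n m = (let a = (- \<lfloor>(real m - real n) / 2\<rfloor>) mod int n;
                 c = nat \<lceil>(real m + 1) / 2\<rceil> in
     (\<lambda>i. if i = 0 then a else if i = c then 0 else if i \<le> m then 1
          else if i = m+1 then (- (a + int m - 1)) mod int n else 0))"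

definition D_nm :: "nat \<Rightarrow> nat \<Rightarrow> enat" where
  "D_nm n m = (if even (int m - int n) then Zdist n m (u0 n m) Zzero
               else max (Zdist n m (u0 n m) Zzero) (Zdist n m (u1 n m) Zzero))"

end

theory Submission
  imports Defs
begin

definition SS :: "(nat \<Rightarrow> int) \<Rightarrow> nat \<Rightarrow> int" where
  "SS v i = (\<Sum>j\<le>i. v j)"

definition gg :: "nat \<Rightarrow> (nat \<Rightarrow> int) \<Rightarrow> int \<Rightarrow> int" where
  "gg m v c = (\<Sum>i\<le>m. \<bar>SS v i - c\<bar>)"

lemma SS_0[simp]: "SS v 0 = v 0" by (simp add: SS_def)
lemma SS_Suc: "SS v (Suc i) = SS v i + v (Suc i)" by (simp add: SS_def)

lemma sum_rev_atMost: "(\<Sum>i\<le>m. f (m - i)) = (\<Sum>i\<le>(m::nat). (f i :: int))"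
  by (rule sum.reindex_bij_witness[where i="\<lambda>i. m - i" and j="\<lambda>i. m - i"]) auto

lemma step_SS:
  assumes n: "n > 1" and im: "i \<le> m"
    and same: "\<forall>j. j \<noteq> i \<and> j \<noteq> i+1 \<longrightarrow> u j = w j"
    and ui: "u i = cadd n m i (w i) d" and ui1: "u (i+1) = cadd n m (i+1) (w (i+1)) (-d)"
  shows "\<exists>t. int n dvd t \<and> (\<forall>j\<le>m. SS u j = SS w j + (if j = i then d else 0) + t)"
proof -
  define t where "t = u 0 - w 0 - (if i = 0 then d else 0)"
  have dvt: "int n dvd t"
  proof (cases "i = 0")
    case True
    then have "u 0 = (w 0 + d) mod int n" using ui unfolding cadd_def by simp
    then have "t = (w 0 + d) mod int n - (w 0 + d)" using True unfolding t_def by simp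
    then show ?thesis by (simp add: mod_eq_dvd_iff[symmetric] dvd_diff_commute mod_mod_trivial)
  next
    case False
    then show ?thesis using same unfolding t_def by simp
  qed
  have "\<forall>j\<le>m. SS u j = SS w j + (if j = i then d else 0) + t"
  proof (intro allI impI)
    fix j assume "j \<le> m"
    then show "SS u j = SS w j + (if j = i then d else 0) + t"
    proof (induction j)
      case 0
      then show ?case using same ui unfolding t_def by (cases "i = 0") auto
    next
      case (Suc j)
      have "u (Suc j) = w (Suc j) + (if Suc j = i then d else 0) - (if j = i then d else 0)"
      proof -
        consider "Suc j = i" | "j = i" | "Suc j \<noteq> i \<and> j \<noteq> i" by blast
        then show ?thesis
        proof cases
          case 1 then show ?thesis using ui Suc.prems unfolding cadd_def by auto
        next
          case 2 then show ?thesis using ui1 Suc.prems unfolding cadd_def by auto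
        next
          case 3 then show ?thesis using same by auto
        qed
      qed
      then show ?case using Suc by (simp add: SS_Suc)
    qed
  qed
  then show ?thesis using dvt by blast
qed

definition upd :: "nat \<Rightarrow> nat \<Rightarrow> (nat \<Rightarrow> int) \<Rightarrow> nat \<Rightarrow> int \<Rightarrow> nat \<Rightarrow> int" where
  "upd n m v i d = v(i := cadd n m i (v i) d, Suc i := cadd n m (Suc i) (v (Suc i)) (-d))"

lemma sum_upd: "finite A \<Longrightarrow> k \<in> A \<Longrightarrow> sum (f(k := x)) A = sum f A - f k + (x::int)"
  by (simp add: sum.remove[of A k] sum.cong[of "A - {k}" "A - {k}" "f(k := x)" f])

lemma cadd_back:
  assumes "k = 0 \<or> k = m+1 \<longrightarrow> x \<in> {0..<int n}"
  shows "cadd n m k (cadd n m k x d) (-d) = x"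
  using assms unfolding cadd_def by (auto simp: mod_diff_left_eq)

lemma upd_props:
  assumes n: "n > 1" and im: "i \<le> m" and V: "Zvert n m v" and d: "d = 1 \<or> d = -1"
    and c1: "1 \<le> i \<longrightarrow> v i + d \<in> {-1,0,1}"
    and c2: "Suc i \<le> m \<longrightarrow> v (Suc i) - d \<in> {-1,0,1}"
  shows "Zvert n m (upd n m v i d)" "Zadj n m v (upd n m v i d)"
    "\<exists>t. int n dvd t \<and> (\<forall>j\<le>m. SS (upd n m v i d) j = SS v j + (if j = i then d else 0) + t)"
proof -
  let ?w = "upd n m v i d"
  have w_i: "?w i = cadd n m i (v i) d" unfolding upd_def by simp
  have w_i1: "?w (i+1) = cadd n m (i+1) (v (i+1)) (-d)" unfolding upd_def by simp
  have same: "\<forall>j. j \<noteq> i \<and> j \<noteq> i+1 \<longrightarrow> ?w j = v j" unfolding upd_def by simp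
  show S: "\<exists>t. int n dvd t \<and> (\<forall>j\<le>m. SS ?w j = SS v j + (if j = i then d else 0) + t)"
    by (rule step_SS[OF n im same w_i w_i1])
  have V0: "v 0 \<in> {0..<int n}" and Vm: "v (m+1) \<in> {0..<int n}"
    and Vmid: "\<And>j. 1 \<le> j \<Longrightarrow> j \<le> m \<Longrightarrow> v j \<in> {-1,0,1}"
    and Vbig: "\<And>j. j > m+1 \<Longrightarrow> v j = 0" and Vdvd: "int n dvd (\<Sum>j\<le>m+1. v j)"
    using V unfolding Zvert_def by auto
  have np: "int n > 0" using n by simp
  have wV: "Zvert n m ?w"
    unfolding Zvert_def
  proof (intro conjI allI impI)
    show "?w 0 \<in> {0..<int n}"
      using V0 np im unfolding upd_def cadd_def by auto
    show "?w (m+1) \<in> {0..<int n}"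
      using Vm np im unfolding upd_def cadd_def by auto
    fix j assume "1 \<le> j \<and> j \<le> m"
    then show "?w j \<in> {-1,0,1}" using c1 c2 Vmid[of j] unfolding upd_def cadd_def by auto
  next
    fix j assume "j > m+1"
    then show "?w j = 0" using Vbig im unfolding upd_def by auto
  next
    have fin: "finite {..m+1}" by simp
    have "(\<Sum>j\<le>m+1. ?w j) = (\<Sum>j\<le>m+1. v j) - v i + cadd n m i (v i) d - v (Suc i) + cadd n m (Suc i) (v (Suc i)) (-d)"
    proof -
      have i1: "i \<in> {..m+1}" "Suc i \<in> {..m+1}" using im by auto
      have "(\<Sum>j\<le>m+1. ?w j) = sum (v(i := cadd n m i (v i) d)) {..m+1} - (v(i := cadd n m i (v i) d)) (Suc i) + cadd n m (Suc i) (v (Suc i)) (-d)"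
        unfolding upd_def by (rule sum_upd[OF fin i1(2)])
      also have "sum (v(i := cadd n m i (v i) d)) {..m+1} = sum v {..m+1} - v i + cadd n m i (v i) d"
        by (rule sum_upd[OF fin i1(1)])
      finally show ?thesis by simp
    qed
    moreover have "int n dvd (cadd n m i (v i) d - (v i + d))"
      unfolding cadd_def by (simp add: mod_eq_dvd_iff[symmetric] dvd_diff_commute)
    moreover have "int n dvd (cadd n m (Suc i) (v (Suc i)) (-d) - (v (Suc i) - d))"
      unfolding cadd_def by (simp add: mod_eq_dvd_iff[symmetric] dvd_diff_commute)
    ultimately show "int n dvd (\<Sum>j\<le>m+1. ?w j)" using Vdvd
    proof -
      assume a: "(\<Sum>j\<le>m+1. ?w j) = (\<Sum>j\<le>m+1. v j) - v i + cadd n m i (v i) d - v (Suc i) + cadd n m (Suc i) (v (Suc i)) (-d)"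
        and b: "int n dvd (cadd n m i (v i) d - (v i + d))"
        and c: "int n dvd (cadd n m (Suc i) (v (Suc i)) (-d) - (v (Suc i) - d))"
        and e: "int n dvd (\<Sum>j\<le>m+1. v j)"
      have "(\<Sum>j\<le>m+1. ?w j) = (\<Sum>j\<le>m+1. v j) + (cadd n m i (v i) d - (v i + d)) + (cadd n m (Suc i) (v (Suc i)) (-d) - (v (Suc i) - d))"
        using a by simp
      then show ?thesis by (simp only:) (rule dvd_add[OF dvd_add[OF e b] c])
    qed
  qed
  then show "Zvert n m ?w" .
  have back1: "v i = cadd n m i (?w i) (-d)"
    using cadd_back[of i m "v i" n d] V0 Vm im w_i by auto
  have back2: "v (i+1) = cadd n m (i+1) (?w (i+1)) d"
    using cadd_back[of "i+1" m "v (i+1)" n "-d"] V0 Vm im w_i1 by auto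
  show "Zadj n m v ?w"
    unfolding Zadj_def
    using V wV im same back1 back2 d by (auto intro!: exI[of _ i])
qed

lemma sum_change_one:
  assumes "finite A" "k \<in> A" "\<forall>j\<in>A. j \<noteq> k \<longrightarrow> f j = h j"
  shows "sum h A = sum f A - f k + (h k :: int)"
proof -
  have "sum h A = h k + sum h (A - {k})" using assms by (simp add: sum.remove)
  moreover have "sum f A = f k + sum f (A - {k})" using assms by (simp add: sum.remove)
  moreover have "sum h (A - {k}) = sum f (A - {k})" using assms(3) by (intro sum.cong) auto
  ultimately show ?thesis by simp
qed

lemma Zvert_facts:
  assumes "Zvert n m v"
  shows "v 0 \<in> {0..<int n}" "v (m+1) \<in> {0..<int n}"
    "\<And>j. 1 \<le> j \<Longrightarrow> j \<le> m \<Longrightarrow> v j \<in> {-1,0,1}"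
    "\<And>j. j > m+1 \<Longrightarrow> v j = 0" "int n dvd (\<Sum>j\<le>m+1. v j)"
  using assms unfolding Zvert_def by auto

lemma dvd_range_zero: "int n dvd (x::int) \<Longrightarrow> 0 \<le> x \<Longrightarrow> x < int n \<Longrightarrow> x = 0"
  using zdvd_not_zless[of x "int n"] by (cases "x = 0") auto

lemma gg_zero_vert:
  assumes V: "Zvert n m v" and c: "int n dvd c" and g: "gg m v c = 0"
  shows "v = Zzero"
proof -
  have all: "\<forall>j\<le>m. SS v j = c"
  proof -
    have "\<forall>j\<in>{..m}. \<bar>SS v j - c\<bar> = 0"
      using g unfolding gg_def by (subst (asm) sum_nonneg_eq_0_iff) auto
    then show ?thesis by auto
  qed
  note F = Zvert_facts[OF V]
  have c0: "c = 0" using all F(1) c dvd_range_zero[of n c] by auto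
  show ?thesis
  proof
    fix j
    show "v j = Zzero j"
    proof (cases "j = 0")
      case True then show ?thesis using all[rule_format, of 0] c0 by (simp add: Zzero_def)
    next
      case False
      then obtain k where k: "j = Suc k" by (cases j) auto
      show ?thesis
      proof (cases "j \<le> m")
        case True
        then show ?thesis using all c0 k SS_Suc[of v k] by (simp add: Zzero_def)
      next
        case False
        show ?thesis
        proof (cases "j = m+1")
          case True
          have "(\<Sum>j\<le>m+1. v j) = SS v m + v (m+1)" by (simp add: SS_def)
          then have "int n dvd v (m+1)" using F(5) all c0 by simp
          then show ?thesis using True F(2) dvd_range_zero by (auto simp: Zzero_def)
        next
          case False
          then show ?thesis using \<open>\<not> j \<le> m\<close> F(4) by (simp add: Zzero_def)
        qed
      qed
    qed
  qed
qed

lemma v_diff: "1 \<le> j \<Longrightarrow> v j = SS v j - SS v (j - 1)"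
  by (cases j) (auto simp: SS_Suc)

lemma move_step:
  assumes n: "n > 1" and im: "i \<le> m" and V: "Zvert n m v" and d: "d = 1 \<or> d = -1"
    and c1: "1 \<le> i \<longrightarrow> v i + d \<in> {-1,0,1}"
    and c2: "Suc i \<le> m \<longrightarrow> v (Suc i) - d \<in> {-1,0,1}"
    and tow: "d * (SS v i - c) < 0"
  shows "\<exists>c'. int n dvd c' - c \<and> Zvert n m (upd n m v i d) \<and> Zadj n m v (upd n m v i d)
           \<and> gg m (upd n m v i d) c' = gg m v c - 1"
proof -
  note P = upd_props[OF n im V d c1 c2]
  obtain t where t: "int n dvd t" "\<forall>j\<le>m. SS (upd n m v i d) j = SS v j + (if j = i then d else 0) + t"
    using P(3) by blast
  have "gg m (upd n m v i d) (c + t) = (\<Sum>j\<le>m. \<bar>SS v j + (if j = i then d else 0) - c\<bar>)"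
    unfolding gg_def using t(2) by (intro sum.cong) auto
  also have "\<dots> = gg m v c - \<bar>SS v i - c\<bar> + \<bar>SS v i + d - c\<bar>"
    unfolding gg_def using im by (subst sum_change_one[of "{..m}" i "\<lambda>j. \<bar>SS v j - c\<bar>"]) auto
  also have "\<dots> = gg m v c - 1" using d tow by (auto simp: abs_if)
  finally show ?thesis using P(1,2) t(1) by (intro exI[of _ "c + t"]) auto
qed

lemma ub:
  assumes n: "n > 1"
  shows "\<forall>v c. Zvert n m v \<longrightarrow> int n dvd c \<longrightarrow> gg m v c = int N \<longrightarrow> (Zadj n m ^^ N) v Zzero"
proof (induction N)
  case 0
  then show ?case using gg_zero_vert by auto
next
  case (Suc N)
  show ?case
  proof (intro allI impI)
    fix v c assume V: "Zvert n m v" and c: "int n dvd c" and g: "gg m v c = int (Suc N)"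
    note F = Zvert_facts[OF V]
    have "\<exists>i\<le>m. \<exists>d. (d = 1 \<or> d = -1) \<and> (1 \<le> i \<longrightarrow> v i + d \<in> {-1,0,1}) \<and>
            (Suc i \<le> m \<longrightarrow> v (Suc i) - d \<in> {-1,0,1}) \<and> d * (SS v i - c) < 0"
    proof (cases "\<exists>j\<le>m. SS v j > c")
      case True
      define M where "M = Max (SS v ` {..m})"
      have "M \<in> SS v ` {..m}" unfolding M_def by (intro Max_in) auto
      then obtain i where i: "i \<le> m" "SS v i = M" by auto
      have Mge: "\<And>j. j \<le> m \<Longrightarrow> SS v j \<le> M" unfolding M_def by (intro Max_ge) auto
      from True obtain j where "j \<le> m" "SS v j > c" by auto
      then have "SS v i > c" using Mge i by fastforce
      moreover have "1 \<le> i \<longrightarrow> v i + (-1) \<in> {-1,0,1}"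
        using F(3)[of i] v_diff[of i v] Mge[of "i-1"] i by (auto simp: le_diff_conv)
      moreover have "Suc i \<le> m \<longrightarrow> v (Suc i) - (-1) \<in> {-1,0,1}"
        using F(3)[of "Suc i"] SS_Suc[of v i] Mge[of "Suc i"] i by auto
      ultimately show ?thesis using i by (intro exI[of _ i] conjI exI[of _ "-1"]) auto
    next
      case False
      have "\<exists>j\<le>m. SS v j \<noteq> c"
      proof (rule ccontr)
        assume "\<not> ?thesis"
        then have "gg m v c = 0" unfolding gg_def by simp
        then show False using g by simp
      qed
      then have ex: "\<exists>j\<le>m. SS v j < c" using False by fastforce
      define M where "M = Min (SS v ` {..m})"
      have "M \<in> SS v ` {..m}" unfolding M_def by (intro Min_in) auto
      then obtain i where i: "i \<le> m" "SS v i = M" by auto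
      have Mle: "\<And>j. j \<le> m \<Longrightarrow> M \<le> SS v j" unfolding M_def by (intro Min_le) auto
      from ex obtain j where "j \<le> m" "SS v j < c" by auto
      then have "SS v i < c" using Mle i by fastforce
      moreover have "1 \<le> i \<longrightarrow> v i + 1 \<in> {-1,0,1}"
        using F(3)[of i] v_diff[of i v] Mle[of "i-1"] i by (auto simp: le_diff_conv)
      moreover have "Suc i \<le> m \<longrightarrow> v (Suc i) - 1 \<in> {-1,0,1}"
        using F(3)[of "Suc i"] SS_Suc[of v i] Mle[of "Suc i"] i by auto
      ultimately show ?thesis using i by (intro exI[of _ i] conjI exI[of _ "1"]) auto
    qed
    then obtain i d where i: "i \<le> m" "d = 1 \<or> d = -1" "1 \<le> i \<longrightarrow> v i + d \<in> {-1,0,1}"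
      "Suc i \<le> m \<longrightarrow> v (Suc i) - d \<in> {-1,0,1}" "d * (SS v i - c) < 0" by blast
    obtain c' where c': "int n dvd c' - c" "Zvert n m (upd n m v i d)" "Zadj n m v (upd n m v i d)"
      "gg m (upd n m v i d) c' = gg m v c - 1"
      using move_step[OF n i(1) V i(2-5)] by blast
    have "int n dvd c'" using c c'(1) by (metis dvd_add diff_add_cancel)
    then have "(Zadj n m ^^ N) (upd n m v i d) Zzero" using Suc.IH c' g by simp
    then show "(Zadj n m ^^ Suc N) v Zzero" using c'(3) by (intro relpowp_Suc_I2[where P="Zadj n m"])
  qed
qed

lemma gg_nonneg: "0 \<le> gg m v c" unfolding gg_def by (intro sum_nonneg) auto

lemma lb:
  assumes n: "n > 1"
  shows "\<forall>u. (Zadj n m ^^ L) u Zzero \<longrightarrow> (\<exists>c. int n dvd c \<and> gg m u c \<le> int L)"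
proof (induction L)
  case 0
  have "gg m Zzero 0 = 0" unfolding gg_def SS_def Zzero_def by simp
  then show ?case by auto
next
  case (Suc L)
  show ?case
  proof (intro allI impI)
    fix u assume "(Zadj n m ^^ Suc L) u Zzero"
    then obtain w where uw: "Zadj n m u w" and wz: "(Zadj n m ^^ L) w Zzero"
      using relpowp_Suc_D2 by metis
    obtain c where c: "int n dvd c" "gg m w c \<le> int L" using Suc.IH wz by blast
    from uw obtain i where i: "i \<le> m" "\<forall>j. j \<noteq> i \<and> j \<noteq> i+1 \<longrightarrow> u j = w j"
      and cs: "(u i = cadd n m i (w i) 1 \<and> u (i+1) = cadd n m (i+1) (w (i+1)) (-1)) \<or>
         (u i = cadd n m i (w i) (-1) \<and> u (i+1) = cadd n m (i+1) (w (i+1)) 1)"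
      unfolding Zadj_def by blast
    obtain d where d: "d = 1 \<or> d = -1" "u i = cadd n m i (w i) d" "u (i+1) = cadd n m (i+1) (w (i+1)) (-d)"
      using cs by (metis minus_minus)
    obtain t where t: "int n dvd t" "\<forall>j\<le>m. SS u j = SS w j + (if j = i then d else 0) + t"
      using step_SS[OF n i(1) i(2) d(2) d(3)] by blast
    have "gg m u (c + t) = (\<Sum>j\<le>m. \<bar>SS w j + (if j = i then d else 0) - c\<bar>)"
      unfolding gg_def using t(2) by (intro sum.cong) auto
    also have "\<dots> = gg m w c - \<bar>SS w i - c\<bar> + \<bar>SS w i + d - c\<bar>"
      unfolding gg_def using i(1) by (subst sum_change_one[of "{..m}" i "\<lambda>j. \<bar>SS w j - c\<bar>"]) auto
    also have "\<dots> \<le> gg m w c + 1" using d(1) by (auto simp: abs_if)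
    finally have "gg m u (c + t) \<le> int (Suc L)" using c(2) by simp
    moreover have "int n dvd c + t" using c(1) t(1) by simp
    ultimately show "\<exists>c. int n dvd c \<and> gg m u c \<le> int (Suc L)" by blast
  qed
qed

lemma compare:
  assumes n: "n > 1" and V: "Zvert n m v" and b: "int n dvd b"
    and le: "\<forall>c. int n dvd c \<longrightarrow> gg m v b \<le> gg m u c"
  shows "Zdist n m v Zzero \<le> Zdist n m u Zzero"
  unfolding Zdist_def
proof (rule INF_greatest)
  fix k assume "k \<in> {k. (Zadj n m ^^ k) u Zzero}"
  then obtain c where c: "int n dvd c" "gg m u c \<le> int k" using lb[OF n] by blast
  define N where "N = nat (gg m v b)"
  have gN: "gg m v b = int N" unfolding N_def using gg_nonneg by simp
  have "(Zadj n m ^^ N) v Zzero" using ub[OF n] V b gN by blast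
  then have "(INF k \<in> {k. (Zadj n m ^^ k) v Zzero}. enat k) \<le> enat N" by (intro INF_lower2[of N]) auto
  moreover have "N \<le> k" using gN le c by force
  ultimately show "(INF k \<in> {k. (Zadj n m ^^ k) v Zzero}. enat k) \<le> enat k"
    using order_trans enat_ord_simps(1) by blast
qed

lemma lip:
  assumes V: "Zvert n m v" and ij: "i \<le> j" "j \<le> m"
  shows "\<bar>SS v j - SS v i\<bar> \<le> int j - int i"
proof -
  have "\<forall>j. i + k \<le> m \<longrightarrow> \<bar>SS v (i + k) - SS v i\<bar> \<le> int k" for k
  proof (induction k)
    case 0 then show ?case by simp
  next
    case (Suc k)
    show ?case
    proof (intro allI impI)
      fix j assume h: "i + Suc k \<le> m"
      have "v (Suc (i + k)) \<in> {-1,0,1}" using Zvert_facts(3)[OF V, of "Suc (i+k)"] h by auto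
      then show "\<bar>SS v (i + Suc k) - SS v i\<bar> \<le> int (Suc k)"
        using Suc.IH h SS_Suc[of v "i+k"] by auto
    qed
  qed
  from this[of "j - i"] ij show ?thesis by simp
qed

lemma sum_int_conv: "(\<Sum>l\<in>{0..int i}. v (nat l)) = SS v i"
  unfolding SS_def
  by (rule sum.reindex_bij_witness[where i=int and j=nat]) auto

lemma nopiv:
  assumes V: "Zvert n m v" and H: "hpiv n m v \<ge> h_nm n m" and im: "i \<le> m"
    and close: "\<bar>real i - real m / 2\<bar> < h_nm n m"
  shows "\<not> int n dvd SS v i"
proof
  assume dv: "int n dvd SS v i"
  have P: "int i \<in> Piv n m v" unfolding Piv_def using dv im by (simp add: sum_int_conv)
  have fin: "finite (Piv n m v)"
    by (rule finite_subset[of _ "{-1..int m + 1}"]) (auto simp: Piv_def)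
  have "hpiv n m v \<le> \<bar>real_of_int (int i) - real m / 2\<bar>"
    unfolding hpiv_def using fin P by (intro Min_le) (auto intro!: rev_image_eqI[where x="int i"])
  then show False using H close by simp
qed

lemma band:
  assumes V: "Zvert n m v" and n: "n > 1" and LR: "L + 2 \<le> R" "R \<le> m"
    and np: "\<forall>i. L < i \<and> i < R \<longrightarrow> \<not> int n dvd SS v i"
  shows "\<exists>b. int n dvd b \<and> (\<forall>i. L \<le> i \<and> i \<le> R \<longrightarrow> b \<le> SS v i \<and> SS v i \<le> b + int n)"
proof -
  define b where "b = SS v (L+1) - SS v (L+1) mod int n"
  have bd: "int n dvd b" unfolding b_def by (simp add: minus_mod_eq_mult_div)
  have inner: "L + 1 + k < R \<longrightarrow> b < SS v (L+1+k) \<and> SS v (L+1+k) < b + int n" for k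
  proof (induction k)
    case 0
    have nd: "\<not> int n dvd SS v (L+1)" using np LR by auto
    have "SS v (L+1) mod int n \<noteq> 0" using nd by (simp add: dvd_eq_mod_eq_0)
    moreover have "0 \<le> SS v (L+1) mod int n" "SS v (L+1) mod int n < int n" using n by auto
    ultimately show ?case unfolding b_def by auto
  next
    case (Suc k)
    show ?case
    proof (intro impI)
      assume h: "L + 1 + Suc k < R"
      have IH: "b < SS v (L+1+k)" "SS v (L+1+k) < b + int n" using Suc.IH h by auto
      have "v (Suc (L+1+k)) \<in> {-1,0,1}" using Zvert_facts(3)[OF V, of "Suc (L+1+k)"] h LR by auto
      then have st: "SS v (L+1+Suc k) \<ge> SS v (L+1+k) - 1" "SS v (L+1+Suc k) \<le> SS v (L+1+k) + 1"
        using SS_Suc[of v "L+1+k"] by auto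
      have nd: "\<not> int n dvd SS v (L+1+Suc k)" using np h by auto
      have "SS v (L+1+Suc k) \<noteq> b" using nd bd by auto
      moreover have "SS v (L+1+Suc k) \<noteq> b + int n" using nd bd by (metis dvd_add dvd_refl)
      ultimately show "b < SS v (L+1+Suc k) \<and> SS v (L+1+Suc k) < b + int n"
        using IH st by auto
    qed
  qed
  have inner2: "\<And>i. L < i \<Longrightarrow> i < R \<Longrightarrow> b < SS v i \<and> SS v i < b + int n"
  proof -
    fix i assume "L < i" "i < R"
    then show "b < SS v i \<and> SS v i < b + int n" using inner[of "i - L - 1"] by auto
  qed
  have eL: "b \<le> SS v L \<and> SS v L \<le> b + int n"
  proof -
    have "v (Suc L) \<in> {-1,0,1}" using Zvert_facts(3)[OF V, of "Suc L"] LR by auto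
    then show ?thesis using inner2[of "L+1"] LR SS_Suc[of v L] by auto
  qed
  have eR: "b \<le> SS v R \<and> SS v R \<le> b + int n"
  proof -
    obtain r where r: "R = Suc r" using LR by (cases R) auto
    have "v R \<in> {-1,0,1}" using Zvert_facts(3)[OF V, of R] LR by auto
    then show ?thesis using inner2[of r] LR r SS_Suc[of v r] by auto
  qed
  show ?thesis
  proof (intro exI conjI allI impI)
    show "int n dvd b" by (rule bd)
    fix i assume "L \<le> i \<and> i \<le> R"
    then show "b \<le> SS v i" "SS v i \<le> b + int n"
      using inner2[of i] eL eR by (cases "i = L"; cases "i = R"; auto)+
  qed
qed

lemma term_bound:
  fixes x b N y D r :: int
  assumes "b \<le> y" "y \<le> b + N" "\<bar>x - y\<bar> \<le> r" "N + 2*r \<le> max N D" "0 \<le> r" "0 \<le> N"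
  shows "\<bar>x - b\<bar> + \<bar>x - b - N\<bar> \<le> max N D"
proof -
  have "\<bar>x - b\<bar> + \<bar>x - b - N\<bar> \<le> N + 2*r" using assms(1-3,5,6) by (auto simp: abs_if)
  then show ?thesis using assms(4) by linarith
qed

lemma upper_sum:
  assumes V: "Zvert n m v" and band: "\<forall>i. L \<le> i \<and> i \<le> R \<longrightarrow> b \<le> SS v i \<and> SS v i \<le> b + int n"
    and LR: "L \<le> R" "R \<le> m" and eL: "2 * int L = int m - int n - e" and eR: "2 * int R = int m + int n + e"
    and e: "0 \<le> e"
  shows "gg m v b + gg m v (b + int n) \<le> (\<Sum>i\<le>m. max (int n) (\<bar>2 * int i - int m\<bar> - e))"
proof -
  have "gg m v b + gg m v (b + int n) = (\<Sum>i\<le>m. \<bar>SS v i - b\<bar> + \<bar>SS v i - b - int n\<bar>)"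
    unfolding gg_def by (simp add: sum.distrib algebra_simps)
  also have "\<dots> \<le> (\<Sum>i\<le>m. max (int n) (\<bar>2 * int i - int m\<bar> - e))"
  proof (rule sum_mono)
    fix i assume i: "i \<in> {..m}"
    show "\<bar>SS v i - b\<bar> + \<bar>SS v i - b - int n\<bar> \<le> max (int n) (\<bar>2 * int i - int m\<bar> - e)"
    proof (cases "i < L")
      case True
      have l: "\<bar>SS v L - SS v i\<bar> \<le> int L - int i" using lip[OF V, of i L] True LR by auto
      show ?thesis
        by (rule term_bound[where y="SS v L" and r="int L - int i"])
           (use band LR l True eL in \<open>auto simp: abs_minus_commute\<close>)
    next
      case False
      show ?thesis
      proof (cases "R < i")
        case True
        have l: "\<bar>SS v i - SS v R\<bar> \<le> int i - int R" using lip[OF V, of R i] True i by auto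
        show ?thesis
          by (rule term_bound[where y="SS v R" and r="int i - int R"])
             (use band LR l True eR in \<open>auto\<close>)
      next
        case False
        show ?thesis
          by (rule term_bound[where y="SS v i" and r=0])
             (use band \<open>\<not> i < L\<close> False in \<open>auto\<close>)
      qed
    qed
  qed
  finally show ?thesis .
qed

lemma floor_half: "\<lfloor>(real m - real n) / 2\<rfloor> = (int m - int n) div 2"
proof -
  have "(real m - real n) / 2 = real_of_int (int m - int n) / real_of_int 2" by simp
  then show ?thesis by (simp only: floor_divide_of_int_eq)
qed

lemma odd_mult_bound:
  assumes "int n dvd z" shows "\<bar>2 * z + int n\<bar> \<ge> int n"
proof -
  obtain t where t: "z = int n * t" using assms by blast
  have "2 * z + int n = int n * (2 * t + 1)" using t by (simp add: algebra_simps)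
  moreover have "\<bar>2 * t + 1\<bar> \<ge> 1" by arith
  ultimately show ?thesis by (simp add: abs_mult) (metis mult_left_mono mult.right_neutral of_nat_0_le_iff)
qed

lemma pair_abs: "\<bar>x + y\<bar> \<le> \<bar>x\<bar> + \<bar>y::int\<bar>" "\<bar>x - y\<bar> \<le> \<bar>x\<bar> + \<bar>y::int\<bar>"
  by arith+

lemma mod_sub_dvd: "int n dvd (x mod int n - x)"
proof -
  have "(x mod int n) mod int n = x mod int n" by simp
  then show ?thesis by (simp only: mod_eq_dvd_iff)
qed

lemma a_prop: "int n dvd ((- ((int m - int n) div 2)) mod int n + (int m - int n) div 2)"
  using mod_sub_dvd[of n "- ((int m - int n) div 2)"] by simp

lemma SS_u0:
  assumes "j \<le> m"
  shows "SS (u0 n m) j = (- ((int m - int n) div 2)) mod int n + int j"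
  using assms
proof (induction j)
  case 0 then show ?case by (simp add: u0_def Let_def floor_half)
next
  case (Suc j) then show ?case by (simp add: SS_Suc u0_def Let_def)
qed

lemma lb_u0:
  assumes ev: "even (int m - int n)" and nm: "n \<le> m" and c: "int n dvd c"
  shows "(\<Sum>i\<le>m. max (int n) \<bar>2 * int i - int m\<bar>) \<le> 2 * gg m (u0 n m) c"
proof -
  define a where "a = (- ((int m - int n) div 2)) mod int n"
  define q where "q = (int m - int n) div 2"
  have mq: "int m = int n + 2 * q" using ev unfolding q_def by auto
  have aq: "int n dvd a + q" using a_prop unfolding a_def q_def .
  have 2: "2 * gg m (u0 n m) c = (\<Sum>i\<le>m. \<bar>SS (u0 n m) i - c\<bar> + \<bar>SS (u0 n m) (m - i) - c\<bar>)"
    unfolding gg_def sum.distrib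
    using sum_rev_atMost[of "\<lambda>i. \<bar>SS (u0 n m) i - c\<bar>" m] by simp
  have "(\<Sum>i\<le>m. max (int n) \<bar>2 * int i - int m\<bar>) \<le> (\<Sum>i\<le>m. \<bar>SS (u0 n m) i - c\<bar> + \<bar>SS (u0 n m) (m - i) - c\<bar>)"
  proof (rule sum_mono)
    fix i assume i: "i \<in> {..m}"
    define x where "x = SS (u0 n m) i - c"
    define y where "y = SS (u0 n m) (m - i) - c"
    have xv: "x = a + int i - c" unfolding x_def a_def using SS_u0[of i m n] i by simp
    have yv: "y = a + int m - int i - c" unfolding y_def a_def using SS_u0[of "m - i" m n] i by simp
    have "int n dvd (a + q - c)" using aq c by simp
    then have s: "\<bar>2 * (a + q - c) + int n\<bar> \<ge> int n" by (rule odd_mult_bound)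
    have "x + y = 2 * (a + q - c) + int n" using xv yv mq by simp
    moreover have "x - y = 2 * int i - int m" using xv yv by simp
    ultimately show "max (int n) \<bar>2 * int i - int m\<bar> \<le> \<bar>x\<bar> + \<bar>y\<bar>"
      using s pair_abs[of x y] by auto
  qed
  then show ?thesis using 2 by simp
qed

lemma c1_eq: "nat \<lceil>(real m + 1) / 2\<rceil> = (m + 2) div 2"
proof -
  have "\<lceil>(real m + 1) / 2\<rceil> = int ((m + 2) div 2)"
  proof (cases "even m")
    case True
    then obtain r where r: "m = 2 * r" by blast
    show ?thesis by (rule ceiling_unique) (simp_all add: r)
  next
    case False
    then obtain r where r: "m = 2 * r + 1" using oddE by blast
    have "(m + 2) div 2 = r + 1" using r by simp
    then show ?thesis by (intro ceiling_unique) (simp_all add: r)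
  qed
  then show ?thesis by simp
qed

lemma SS_u1:
  assumes "j \<le> m"
  shows "SS (u1 n m) j = (- ((int m - int n) div 2)) mod int n + int j - (if (m + 2) div 2 \<le> j then 1 else 0)"
  using assms
proof (induction j)
  case 0 then show ?case by (simp add: u1_def Let_def floor_half c1_eq)
next
  case (Suc j)
  then show ?case by (simp add: SS_Suc u1_def Let_def c1_eq)
qed

lemma indicator_sum_le: fixes m :: nat shows "(\<Sum>i\<le>m. (if 2 * i = m then 1 else 0 :: int)) \<le> 1"
proof -
  have "(\<Sum>i\<le>m. (if 2 * i = m then 1 else 0 :: int)) = (\<Sum>i\<in>{i\<in>{..m}. 2 * i = m}. 1)"
    using sum.inter_filter[of "{..m}" "\<lambda>_. 1::int" "\<lambda>i. 2*i = m"] by simp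
  also have "\<dots> = int (card {i\<in>{..m}. 2 * i = m})" by simp
  also have "card {i\<in>{..m}. 2 * i = m} \<le> card {m div 2}"
    by (rule card_mono) auto
  finally show ?thesis by simp
qed

lemma odd_mult_bound2:
  assumes "int n dvd z" shows "\<bar>2 * z + int n + 1\<bar> \<ge> int n - 1"
  using odd_mult_bound[OF assms] by arith

lemma lb_u1:
  assumes od: "odd (int m - int n)" and nm: "n \<le> m" and c: "int n dvd c"
  shows "(\<Sum>i\<le>m. max (int n) (\<bar>2 * int i - int m\<bar> - 1)) \<le> 2 * gg m (u1 n m) c + 1"
proof -
  define a where "a = (- ((int m - int n) div 2)) mod int n"
  define q where "q = (int m - int n) div 2"
  define c1 where "c1 = (m + 2) div 2"
  have mq: "int m = int n + 2 * q + 1" using od unfolding q_def by presburger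
  have aq: "int n dvd a + q" using a_prop unfolding a_def q_def .
  have 2: "2 * gg m (u1 n m) c = (\<Sum>i\<le>m. \<bar>SS (u1 n m) i - c\<bar> + \<bar>SS (u1 n m) (m - i) - c\<bar>)"
    unfolding gg_def sum.distrib
    using sum_rev_atMost[of "\<lambda>i. \<bar>SS (u1 n m) i - c\<bar>" m] by simp
  have "(\<Sum>i\<le>m. max (int n) (\<bar>2 * int i - int m\<bar> - 1)) \<le>
     (\<Sum>i\<le>m. (\<bar>SS (u1 n m) i - c\<bar> + \<bar>SS (u1 n m) (m - i) - c\<bar>) + (if 2 * i = m then 1 else 0))"
  proof (rule sum_mono)
    fix i assume i: "i \<in> {..m}"
    define x where "x = SS (u1 n m) i - c"
    define y where "y = SS (u1 n m) (m - i) - c"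
    define s1 where "s1 = (if c1 \<le> i then 1 else 0 :: int)"
    define s2 where "s2 = (if c1 \<le> m - i then 1 else 0 :: int)"
    have xv: "x = a + int i - s1 - c" unfolding x_def a_def s1_def c1_def using SS_u1[of i m n] i by simp
    have yv: "y = a + int m - int i - s2 - c" unfolding y_def a_def s2_def c1_def using SS_u1[of "m - i" m n] i by simp
    have dz: "int n dvd (a + q - c)" using aq c by simp
    have nb: "\<not> (c1 \<le> i \<and> c1 \<le> m - i)" unfolding c1_def using i by auto
    show "max (int n) (\<bar>2 * int i - int m\<bar> - 1) \<le> \<bar>x\<bar> + \<bar>y\<bar> + (if 2 * i = m then 1 else 0)"
    proof (cases "c1 \<le> i \<or> c1 \<le> m - i")
      case True
      then have s12: "s1 + s2 = 1" using nb unfolding s1_def s2_def by auto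
      have "x + y = 2 * (a + q - c) + int n" using xv yv mq s12 by simp
      then have A: "\<bar>x + y\<bar> \<ge> int n" using odd_mult_bound[OF dz] by simp
      have "x - y = 2 * int i - int m - s1 + s2" using xv yv by simp
      then have B: "\<bar>x - y\<bar> \<ge> \<bar>2 * int i - int m\<bar> - 1" using s12 unfolding s1_def s2_def by (auto split: if_splits)
      show ?thesis using A B pair_abs[of x y] by auto
    next
      case False
      then have s12: "s1 = 0" "s2 = 0" unfolding s1_def s2_def by auto
      have m2: "2 * i = m" using False i unfolding c1_def by auto
      have "x + y = 2 * (a + q - c) + int n + 1" using xv yv mq s12 by simp
      then have A: "\<bar>x + y\<bar> \<ge> int n - 1" using odd_mult_bound2[OF dz] by simp
      show ?thesis using A pair_abs[of x y] m2 by auto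
    qed
  qed
  also have "\<dots> = 2 * gg m (u1 n m) c + (\<Sum>i\<le>m. (if 2 * i = m then 1 else 0 :: int))"
    using 2 by (simp add: sum.distrib)
  finally show ?thesis using indicator_sum_le[of m] by simp
qed

theorem lemma5p30:
  fixes n m :: nat and v :: "nat \<Rightarrow> int"
  assumes "1 < n" and "n \<le> m"
    and "Zvert n m v"
    and "hpiv n m v \<ge> h_nm n m"
    and "(\<Sum>i\<in>I_c n m v. v (nat i)) = 0"
  shows "Zdist n m v Zzero \<le> D_nm n m"
proof -
  note n = assms(1) and nm = assms(2) and V = assms(3) and H = assms(4)
  define e :: int where "e = (if even (int m - int n) then 0 else 1)"
  have e01: "e = 0 \<or> e = 1" unfolding e_def by auto
  have ev: "even (int m - int n - e)" unfolding e_def by auto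
  have mne: "int n + e \<le> int m" using nm unfolding e_def by (cases "m = n") auto
  define L where "L = nat ((int m - int n - e) div 2)"
  have L2: "2 * int L = int m - int n - e" unfolding L_def using ev mne by auto
  define R where "R = L + n + nat e"
  have R2: "2 * int R = int m + int n + e" unfolding R_def using L2 e01 by auto
  have LR: "L + 2 \<le> R" "R \<le> m" using n R2 L2 mne e01 unfolding R_def by auto
  have hn: "h_nm n m = (real n + real_of_int e) / 2" unfolding h_nm_def e_def by simp
  have np: "\<forall>i. L < i \<and> i < R \<longrightarrow> \<not> int n dvd SS v i"
  proof (intro allI impI)
    fix i assume i: "L < i \<and> i < R"
    have ii: "\<bar>2 * int i - int m\<bar> \<le> int n + e - 2" using i L2 R2 by auto
    then have "\<bar>real_of_int (2 * int i - int m)\<bar> \<le> real_of_int (int n + e - 2)"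
      by (simp only: of_int_abs[symmetric] of_int_le_iff)
    then have "\<bar>2 * real i - real m\<bar> \<le> real n + real_of_int e - 2" by simp
    then have "\<bar>real i - real m / 2\<bar> < h_nm n m" unfolding hn by (auto simp: abs_if split: if_splits)
    then show "\<not> int n dvd SS v i" using nopiv[OF V H] i LR by auto
  qed
  obtain b where b: "int n dvd b" "\<forall>i. L \<le> i \<and> i \<le> R \<longrightarrow> b \<le> SS v i \<and> SS v i \<le> b + int n"
    using band[OF V n LR np] by blast
  have up: "gg m v b + gg m v (b + int n) \<le> (\<Sum>i\<le>m. max (int n) (\<bar>2 * int i - int m\<bar> - e))"
    using upper_sum[OF V b(2) _ LR(2) L2 R2] LR e01 by auto
  define bs where "bs = (if gg m v b \<le> gg m v (b + int n) then b else b + int n)"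
  have bsd: "int n dvd bs" unfolding bs_def using b(1) by auto
  have bs2: "2 * gg m v bs \<le> (\<Sum>i\<le>m. max (int n) (\<bar>2 * int i - int m\<bar> - e))"
    using up unfolding bs_def by auto
  show ?thesis
  proof (cases "even (int m - int n)")
    case True
    then have e0: "e = 0" unfolding e_def by simp
    have "\<forall>c. int n dvd c \<longrightarrow> gg m v bs \<le> gg m (u0 n m) c"
      using lb_u0[OF True nm] bs2 e0 by fastforce
    then have "Zdist n m v Zzero \<le> Zdist n m (u0 n m) Zzero" by (rule compare[OF n V bsd])
    then show ?thesis unfolding D_nm_def using True by simp
  next
    case False
    then have e1: "e = 1" unfolding e_def by simp
    have "\<forall>c. int n dvd c \<longrightarrow> gg m v bs \<le> gg m (u1 n m) c"
      using lb_u1[OF False nm] bs2 e1 by fastforce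
    then have "Zdist n m v Zzero \<le> Zdist n m (u1 n m) Zzero" by (rule compare[OF n V bsd])
    then show ?thesis unfolding D_nm_def using False by (simp add: le_max_iff_disj)
  qed
qed

end
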